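(* Let $(X,\mu)$ be any measure space, let $N\geq 2$ be an integer, and let $f_1,\dots,f_N$ be non-negative measurable functions on $X$ with $0<\sum_{j=1}^N \|f_j\|_p^p<\infty$. Define $$\widetilde{\Gamma}_p(f_1,\dots,f_N) := \frac{\binom{N}{2}^{-1}\sum_{1\le i< j\le N} \|f_if_j\|_{p/2}^{p/2}}{\frac1N \sum_{j=1}^N \|f_j\|_p^p}.$$ Then for all $p\in(2,\infty)$, $$\Big\|\sum_{j=1}^N f_j\Big\|_p^p \leq \Big[\,1 + (N-1)\,\widetilde{\Gamma}_p(f_1,\dots,f_N)^{1/(p-1)}\Big]^{p-1}\sum_{j=1}^N \|f_j\|_p^p,$$ and for all $p\in(1,2)$ the reverse inequality ($\geq$) holds.
   Context: For any real $q\neq 0$ and measurable $f$, $\|f\|_q := \left(\int |f|^q\,d\mu\right)^{1/q}$ (used even when $q<1$). *)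

theory Defs
  imports "HOL-Analysis.Analysis"
begin

text \<open>It is taken as a real number
  (the integral is always finite in the statement, by the hypotheses).\<close>
definition lpow :: "'a measure \<Rightarrow> real \<Rightarrow> ('a \<Rightarrow> real) \<Rightarrow> real" where
  "lpow M q g = enn2real (\<integral>\<^sup>+ x. ennreal (\<bar>g x\<bar> powr q) \<partial>M)"

definition Gamma_tilde :: "'a measure \<Rightarrow> real \<Rightarrow> nat \<Rightarrow> (nat \<Rightarrow> 'a \<Rightarrow> real) \<Rightarrow> real" where
  "Gamma_tilde M p N f =
     ((\<Sum>i\<in>{1..N}. \<Sum>j\<in>{i<..N}. lpow M (p/2) (\<lambda>x. f i x * f j x)) / real (N choose 2))
     / ((\<Sum>j\<in>{1..N}. lpow M p (f j)) / real N)"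

end

theory Submission
  imports Defs
begin

lemma amgm:
  fixes x y t :: real
  assumes "0 \<le> x" "0 \<le> y" "0 < t" "t < 1"
  shows "x powr t * y powr (1-t) \<le> t*x + (1-t)*y"
proof (cases "x = 0 \<or> y = 0")
  case True then show ?thesis using assms by auto
next
  case False then show ?thesis using assms Youngs_inequality_0[of t "1-t" x y] by auto
qed

lemma sq_expand:
  fixes x :: "nat \<Rightarrow> real"
  assumes "finite I"
  shows "(\<Sum>j\<in>I. x j)^2 = (\<Sum>i\<in>I. x i * x i) + (\<Sum>i\<in>I. \<Sum>j\<in>I-{i}. x i * x j)"
proof -
  have "(\<Sum>j\<in>I. x j)^2 = (\<Sum>i\<in>I. \<Sum>j\<in>I. x i * x j)"
    by (simp add: power2_eq_square sum_product)
  also have "\<dots> = (\<Sum>i\<in>I. x i * x i + (\<Sum>j\<in>I-{i}. x i * x j))"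
    using assms by (intro sum.cong refl) (simp add: sum.remove)
  finally show ?thesis by (simp add: sum.distrib)
qed

lemma sqrt_sum:
  fixes x :: "nat \<Rightarrow> real"
  assumes "finite I" "\<forall>j\<in>I. x j \<ge> 0"
  shows "(\<Sum>i\<in>I. \<Sum>j\<in>I-{i}. (x i * x j) powr (1/2)) \<le> real (card I - 1) * (\<Sum>j\<in>I. x j)"
proof -
  have "(\<Sum>i\<in>I. \<Sum>j\<in>I-{i}. (x i * x j) powr (1/2)) \<le> (\<Sum>i\<in>I. \<Sum>j\<in>I-{i}. (x i + x j)/2)"
  proof (intro sum_mono)
    fix i j assume "i \<in> I" "j \<in> I - {i}"
    then have "x i \<ge> 0" "x j \<ge> 0" using assms by auto
    then show "(x i * x j) powr (1/2) \<le> (x i + x j)/2"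
      using amgm[of "x i" "x j" "1/2"] by (simp add: powr_mult)
  qed
  also have "\<dots> = (\<Sum>i\<in>I. (real (card I - 1) * x i + ((\<Sum>j\<in>I. x j) - x i)) / 2)"
  proof (intro sum.cong refl)
    fix i assume i: "i \<in> I"
    have "(\<Sum>j\<in>I-{i}. (x i + x j)/2) = ((\<Sum>j\<in>I-{i}. x i) + (\<Sum>j\<in>I-{i}. x j))/2"
      by (simp add: sum.distrib sum_divide_distrib[symmetric])
    also have "\<dots> = (real (card I - 1) * x i + ((\<Sum>j\<in>I. x j) - x i)) / 2"
      using i assms by (simp add: sum_diff1 of_nat_diff)
    finally show "(\<Sum>j\<in>I-{i}. (x i + x j)/2) = (real (card I - 1) * x i + ((\<Sum>j\<in>I. x j) - x i)) / 2" .
  qed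
  also have "\<dots> = real (card I - 1) * (\<Sum>j\<in>I. x j)"
  proof (cases "I = {}")
    case True then show ?thesis by simp
  next
    case False
    then have "card I \<ge> 1" using assms(1) by (simp add: Suc_leI card_gt_0_iff)
    then show ?thesis
      by (simp add: sum_divide_distrib[symmetric] sum.distrib sum_distrib_left[symmetric] sum_distrib_right[symmetric] sum_subtractf algebra_simps of_nat_diff; simp add: field_simps)
  qed
  finally show ?thesis .
qed

lemma term_gt2:
  fixes w S c p :: real
  assumes p: "p > 2" and c: "c > 0" and w: "w \<ge> 0" and S: "S \<ge> 0" and wS: "w > 0 \<Longrightarrow> S > 0"
  shows "w * S powr (p-2) \<le> (1/(p-1))*(c powr (2-p) * w powr (p/2)) + (1-1/(p-1))*(c * w powr (1/2) * S powr (p-1))"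
proof (cases "w = 0")
  case True then show ?thesis using p c S by simp
next
  case False
  then have w0: "w > 0" and S0: "S > 0" using w wS by auto
  define r where "r = 1/(p-1)"
  have r: "0 < r" "r < 1" using p by (auto simp: r_def field_simps)
  have "(c powr (2-p) * w powr (p/2)) powr r * (c * w powr (1/2) * S powr (p-1)) powr (1-r)
      = c powr ((2-p)*r + (1-r)) * w powr (p/2*r + 1/2*(1-r)) * S powr ((p-1)*(1-r))"
    using c w0 S0 by (simp add: powr_mult powr_powr powr_add)
  also have "(2-p)*r + (1-r) = 0" using p by (simp add: r_def field_simps)
  also have "p/2*r + 1/2*(1-r) = 1"
  proof -
    have "r*(p-1) = 1" using p by (simp add: r_def)
    moreover have "p/2*r + 1/2*(1-r) = (r*(p-1)+1)/2" by (simp add: field_simps)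
    ultimately show ?thesis by simp
  qed
  also have "(p-1)*(1-r) = p-2" using p by (simp add: r_def field_simps)
  finally have eq: "(c powr (2-p) * w powr (p/2)) powr r * (c * w powr (1/2) * S powr (p-1)) powr (1-r) = w * S powr (p-2)"
    using w0 c by simp
  show ?thesis
    using amgm[of "c powr (2-p) * w powr (p/2)" "c * w powr (1/2) * S powr (p-1)" r] r c w0 S0
    unfolding eq r_def[symmetric] by simp
qed

lemma term_lt2:
  fixes w S c p :: real
  assumes p: "1 < p" "p < 2" and c: "c \<ge> 0" and w: "w \<ge> 0" and S: "S \<ge> 0" and wS: "w > 0 \<Longrightarrow> S > 0"
  shows "c powr (2-p) * w powr (p/2) \<le> (p-1)*(w * S powr (p-2)) + (1-(p-1))*(c * w powr (1/2) * S powr (p-1))"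
proof (cases "w = 0 \<or> c = 0")
  case True then show ?thesis using p c S w by (auto intro!: add_nonneg_nonneg mult_nonneg_nonneg)
next
  case False
  then have w0: "w > 0" and S0: "S > 0" and c0: "c > 0" using w wS c by auto
  define q where "q = p - 1"
  have q: "0 < q" "q < 1" using p by (auto simp: q_def)
  have "(w * S powr (p-2)) powr q * (c * w powr (1/2) * S powr (p-1)) powr (1-q)
      = c powr (1-q) * w powr (q + 1/2*(1-q)) * S powr ((p-2)*q + (p-1)*(1-q))"
    using c0 w0 S0 by (simp add: powr_mult powr_powr powr_add)
  also have "(p-2)*q + (p-1)*(1-q) = 0" by (simp add: q_def algebra_simps)
  also have "q + 1/2*(1-q) = p/2" by (simp add: q_def field_simps)
  also have "1 - q = 2 - p" by (simp add: q_def)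
  finally have eq: "(w * S powr (p-2)) powr q * (c * w powr (1/2) * S powr (p-1)) powr (1-q) = c powr (2-p) * w powr (p/2)"
    using S0 by (simp add: q_def)
  have "(w * S powr (p-2)) powr q * (c * w powr (1/2) * S powr (p-1)) powr (1-q) \<le> q*(w * S powr (p-2)) + (1-q)*(c * w powr (1/2) * S powr (p-1))"
    using q c0 w0 S0 by (intro amgm) auto
  then have "c powr (2-p) * w powr (p/2) \<le> q*(w * S powr (p-2)) + (1-q)*(c * w powr (1/2) * S powr (p-1))"
    by (simp only: eq)
  then show ?thesis by (simp add: q_def)
qed

lemma sqpow: "x \<ge> 0 \<Longrightarrow> ((x::real) * x) powr a = x powr (2*a)"
  by (simp add: powr_mult powr_add[symmetric])

lemma pw_gt2:
  fixes x :: "nat \<Rightarrow> real"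
  assumes I: "finite I" "card I \<ge> 2" and x: "\<forall>j\<in>I. x j \<ge> 0" and p: "p > 2" and th: "0 < \<theta>" "\<theta> < 1"
  shows "(\<Sum>j\<in>I. x j) powr p \<le> \<theta> powr (2-p) * (\<Sum>j\<in>I. x j powr p)
     + ((1-\<theta>)/real(card I - 1)) powr (2-p) * (\<Sum>i\<in>I. \<Sum>j\<in>I-{i}. (x i * x j) powr (p/2))"
proof -
  define S where "S = (\<Sum>j\<in>I. x j)"
  define b where "b = (1-\<theta>)/real(card I - 1)"
  define r where "r = 1/(p-1)"
  define P where "P = (\<Sum>j\<in>I. x j powr p)"
  define Q where "Q = (\<Sum>i\<in>I. \<Sum>j\<in>I-{i}. (x i * x j) powr (p/2))"
  have S0: "S \<ge> 0" unfolding S_def using x by (simp add: sum_nonneg)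
  have xS: "x j \<le> S" if "j \<in> I" for j
    unfolding S_def using x that I by (intro member_le_sum) auto
  have b0: "b > 0" using th I by (simp add: b_def)
  have bn: "b * real (card I - 1) = 1 - \<theta>" using I by (simp add: b_def)
  have r: "0 < r" "r < 1" using p by (auto simp: r_def field_simps)
  have RHS0: "0 \<le> \<theta> powr (2-p) * P + b powr (2-p) * Q"
    unfolding P_def Q_def by (intro add_nonneg_nonneg mult_nonneg_nonneg sum_nonneg) auto
  have "S powr p \<le> \<theta> powr (2-p) * P + b powr (2-p) * Q"
  proof (cases "S = 0")
    case True then show ?thesis using RHS0 by simp
  next
    case False
    then have Sp: "S > 0" using S0 by simp
    have diag: "(x j * x j) * S powr (p-2) \<le> r*(\<theta> powr (2-p) * x j powr p) + (1-r)*(\<theta> * x j * S powr (p-1))"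
      if "j \<in> I" for j
    proof -
      have "x j \<ge> 0" using x that by auto
      then show ?thesis
        using term_gt2[of p \<theta> "x j * x j" S] p th Sp sqpow[of "x j"] unfolding r_def by simp
    qed
    have off: "(x i * x j) * S powr (p-2) \<le> r*(b powr (2-p) * (x i * x j) powr (p/2)) + (1-r)*(b * (x i * x j) powr (1/2) * S powr (p-1))"
      if "i \<in> I" "j \<in> I" for i j
    proof -
      have "x i * x j \<ge> 0" using x that by auto
      then show ?thesis
        using term_gt2[of p b "x i * x j" S] p b0 Sp unfolding r_def by simp
    qed
    have "S powr p = S powr (p-2) * S^2"
      using Sp by (simp add: powr_add[symmetric] flip: powr_numeral)
    also have "\<dots> = (\<Sum>i\<in>I. (x i * x i) * S powr (p-2)) + (\<Sum>i\<in>I. \<Sum>j\<in>I-{i}. (x i * x j) * S powr (p-2))"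
      unfolding S_def sq_expand[OF I(1)] by (simp add: algebra_simps sum_distrib_left sum_distrib_right)
    also have "\<dots> \<le> (\<Sum>i\<in>I. r*(\<theta> powr (2-p) * x i powr p) + (1-r)*(\<theta> * x i * S powr (p-1)))
        + (\<Sum>i\<in>I. \<Sum>j\<in>I-{i}. r*(b powr (2-p) * (x i * x j) powr (p/2)) + (1-r)*(b * (x i * x j) powr (1/2) * S powr (p-1)))"
      using diag off by (intro add_mono sum_mono) auto
    also have "\<dots> = r * (\<theta> powr (2-p) * P + b powr (2-p) * Q) + (1-r) * \<theta> * (S * S powr (p-1))
        + (1-r) * b * S powr (p-1) * (\<Sum>i\<in>I. \<Sum>j\<in>I-{i}. (x i * x j) powr (1/2))"
    proof -
      have h1: "(\<Sum>i\<in>I. r*(\<theta> powr (2-p) * x i powr p) + (1-r)*(\<theta> * x i * S powr (p-1)))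
          = r*(\<Sum>i\<in>I. \<theta> powr (2-p) * x i powr p) + (1-r)*(\<Sum>i\<in>I. \<theta> * x i * S powr (p-1))"
        by (simp add: sum.distrib sum_distrib_left)
      have h2: "(\<Sum>i\<in>I. \<Sum>j\<in>I-{i}. r*(b powr (2-p) * (x i * x j) powr (p/2)) + (1-r)*(b * (x i * x j) powr (1/2) * S powr (p-1)))
          = r*(\<Sum>i\<in>I. \<Sum>j\<in>I-{i}. b powr (2-p) * (x i * x j) powr (p/2)) + (1-r)*(\<Sum>i\<in>I. \<Sum>j\<in>I-{i}. b * (x i * x j) powr (1/2) * S powr (p-1))"
        by (simp add: sum.distrib sum_distrib_left)
      have h3: "(\<Sum>i\<in>I. \<theta> powr (2-p) * x i powr p) = \<theta> powr (2-p) * P"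
        unfolding P_def by (simp add: sum_distrib_left)
      have h4: "(\<Sum>i\<in>I. \<theta> * x i * S powr (p-1)) = \<theta> * (S * S powr (p-1))"
        unfolding S_def by (simp add: sum_distrib_left sum_distrib_right mult.assoc)
      have h5: "(\<Sum>i\<in>I. \<Sum>j\<in>I-{i}. b powr (2-p) * (x i * x j) powr (p/2)) = b powr (2-p) * Q"
        unfolding Q_def by (simp add: sum_distrib_left)
      have h6: "(\<Sum>i\<in>I. \<Sum>j\<in>I-{i}. b * (x i * x j) powr (1/2) * S powr (p-1)) = b * S powr (p-1) * (\<Sum>i\<in>I. \<Sum>j\<in>I-{i}. (x i * x j) powr (1/2))"
        by (simp add: sum_distrib_left ac_simps)
      show ?thesis unfolding h1 h2 h3 h4 h5 h6 by (simp add: algebra_simps)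
    qed
    also have "\<dots> \<le> r * (\<theta> powr (2-p) * P + b powr (2-p) * Q) + (1-r) * \<theta> * (S * S powr (p-1))
        + (1-r) * b * S powr (p-1) * (real (card I - 1) * S)"
      using sqrt_sum[OF I(1) x] r b0 Sp unfolding S_def
      by (intro add_left_mono mult_left_mono) auto
    also have "\<dots> = r * (\<theta> powr (2-p) * P + b powr (2-p) * Q) + (1-r) * S powr p"
    proof -
      have "S * S powr (p-1) = S powr p" using Sp by (simp add: powr_add[symmetric] powr_mult_base)
      note e = this
      have "(1-r) * \<theta> * (S * S powr (p-1)) + (1-r) * b * S powr (p-1) * (real (card I - 1) * S)
          = (1-r) * S powr p * (\<theta> + b * real (card I - 1))"
        by (simp add: e[symmetric] algebra_simps)
      then show ?thesis using bn by simp
    qed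
    finally have "r * S powr p \<le> r * (\<theta> powr (2-p) * P + b powr (2-p) * Q)" by (simp add: algebra_simps)
    then show "S powr p \<le> \<theta> powr (2-p) * P + b powr (2-p) * Q" using r by simp
  qed
  then show ?thesis by (simp add: S_def b_def P_def Q_def)
qed

lemma pw_lt2:
  fixes x :: "nat \<Rightarrow> real"
  assumes I: "finite I" "card I \<ge> 2" and x: "\<forall>j\<in>I. x j \<ge> 0" and p: "1 < p" "p < 2" and th: "0 < \<theta>" "\<theta> \<le> 1"
  shows "\<theta> powr (2-p) * (\<Sum>j\<in>I. x j powr p)
     + ((1-\<theta>)/real(card I - 1)) powr (2-p) * (\<Sum>i\<in>I. \<Sum>j\<in>I-{i}. (x i * x j) powr (p/2)) \<le> (\<Sum>j\<in>I. x j) powr p"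
proof -
  define S where "S = (\<Sum>j\<in>I. x j)"
  define b where "b = (1-\<theta>)/real(card I - 1)"
  define r where "r = p-1"
  define P where "P = (\<Sum>j\<in>I. x j powr p)"
  define Q where "Q = (\<Sum>i\<in>I. \<Sum>j\<in>I-{i}. (x i * x j) powr (p/2))"
  have S0: "S \<ge> 0" unfolding S_def using x by (simp add: sum_nonneg)
  have xS: "x j \<le> S" if "j \<in> I" for j
    unfolding S_def using x that I by (intro member_le_sum) auto
  have b0: "b \<ge> 0" using th I by (simp add: b_def)
  have bn: "b * real (card I - 1) = 1 - \<theta>" using I by (simp add: b_def)
  have r: "0 < r" "r < 1" using p by (auto simp: r_def)
  have "\<theta> powr (2-p) * P + b powr (2-p) * Q \<le> S powr p"
  proof (cases "S = 0")
    case True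
    then have "\<forall>j\<in>I. x j = 0" using xS x by force
    then show ?thesis using True by (simp add: P_def Q_def)
  next
    case False
    then have Sp: "S > 0" using S0 by simp
    have diag: "\<theta> powr (2-p) * x j powr p \<le> r*((x j * x j) * S powr (p-2)) + (1-r)*(\<theta> * x j * S powr (p-1))"
      if "j \<in> I" for j
    proof -
      have "x j \<ge> 0" using x that by auto
      then show ?thesis
        using term_lt2[of p \<theta> "x j * x j" S] p th Sp sqpow[of "x j"] unfolding r_def by simp
    qed
    have off: "b powr (2-p) * (x i * x j) powr (p/2) \<le> r*((x i * x j) * S powr (p-2)) + (1-r)*(b * (x i * x j) powr (1/2) * S powr (p-1))"
      if "i \<in> I" "j \<in> I" for i j
    proof -
      have "x i * x j \<ge> 0" using x that by auto
      then show ?thesis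
        using term_lt2[of p b "x i * x j" S] p b0 Sp unfolding r_def by simp
    qed
    have e: "S * S powr (p-1) = S powr p" using Sp by (simp add: powr_add[symmetric] powr_mult_base)
    have "\<theta> powr (2-p) * P + b powr (2-p) * Q = (\<Sum>i\<in>I. \<theta> powr (2-p) * x i powr p) + (\<Sum>i\<in>I. \<Sum>j\<in>I-{i}. b powr (2-p) * (x i * x j) powr (p/2))"
      unfolding P_def Q_def by (simp add: sum_distrib_left)
    also have "\<dots> \<le> (\<Sum>i\<in>I. r*((x i * x i) * S powr (p-2)) + (1-r)*(\<theta> * x i * S powr (p-1)))
        + (\<Sum>i\<in>I. \<Sum>j\<in>I-{i}. r*((x i * x j) * S powr (p-2)) + (1-r)*(b * (x i * x j) powr (1/2) * S powr (p-1)))"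
      using diag off by (intro add_mono sum_mono) auto
    also have "\<dots> = r * ((\<Sum>i\<in>I. (x i * x i) * S powr (p-2)) + (\<Sum>i\<in>I. \<Sum>j\<in>I-{i}. (x i * x j) * S powr (p-2)))
        + (1-r) * \<theta> * (S * S powr (p-1))
        + (1-r) * b * S powr (p-1) * (\<Sum>i\<in>I. \<Sum>j\<in>I-{i}. (x i * x j) powr (1/2))"
    proof -
      have h1: "(\<Sum>i\<in>I. r*((x i * x i) * S powr (p-2)) + (1-r)*(\<theta> * x i * S powr (p-1)))
          = r*(\<Sum>i\<in>I. (x i * x i) * S powr (p-2)) + (1-r)*(\<Sum>i\<in>I. \<theta> * x i * S powr (p-1))"
        by (simp add: sum.distrib sum_distrib_left)
      have h2: "(\<Sum>i\<in>I. \<Sum>j\<in>I-{i}. r*((x i * x j) * S powr (p-2)) + (1-r)*(b * (x i * x j) powr (1/2) * S powr (p-1)))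
          = r*(\<Sum>i\<in>I. \<Sum>j\<in>I-{i}. (x i * x j) * S powr (p-2)) + (1-r)*(\<Sum>i\<in>I. \<Sum>j\<in>I-{i}. b * (x i * x j) powr (1/2) * S powr (p-1))"
        by (simp add: sum.distrib sum_distrib_left)
      have h4: "(\<Sum>i\<in>I. \<theta> * x i * S powr (p-1)) = \<theta> * (S * S powr (p-1))"
        unfolding S_def by (simp add: sum_distrib_left sum_distrib_right mult.assoc)
      have h6: "(\<Sum>i\<in>I. \<Sum>j\<in>I-{i}. b * (x i * x j) powr (1/2) * S powr (p-1)) = b * S powr (p-1) * (\<Sum>i\<in>I. \<Sum>j\<in>I-{i}. (x i * x j) powr (1/2))"
        by (simp add: sum_distrib_left ac_simps)
      show ?thesis unfolding h1 h2 h4 h6 by (simp add: algebra_simps)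
    qed
    also have "(\<Sum>i\<in>I. (x i * x i) * S powr (p-2)) + (\<Sum>i\<in>I. \<Sum>j\<in>I-{i}. (x i * x j) * S powr (p-2)) = S powr p"
    proof -
      have "S powr p = S powr (p-2) * S^2"
        using Sp by (simp add: powr_add[symmetric] flip: powr_numeral)
      also have "\<dots> = (\<Sum>i\<in>I. (x i * x i) * S powr (p-2)) + (\<Sum>i\<in>I. \<Sum>j\<in>I-{i}. (x i * x j) * S powr (p-2))"
        unfolding S_def sq_expand[OF I(1)] by (simp add: algebra_simps sum_distrib_left sum_distrib_right)
      finally show ?thesis by simp
    qed
    also have "r * S powr p + (1-r) * \<theta> * (S * S powr (p-1))
        + (1-r) * b * S powr (p-1) * (\<Sum>i\<in>I. \<Sum>j\<in>I-{i}. (x i * x j) powr (1/2))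
        \<le> r * S powr p + (1-r) * \<theta> * (S * S powr (p-1))
        + (1-r) * b * S powr (p-1) * (real (card I - 1) * S)"
      using sqrt_sum[OF I(1) x] r b0 Sp unfolding S_def
      by (intro add_left_mono mult_left_mono) auto
    also have "r * S powr p + (1-r) * \<theta> * (S * S powr (p-1)) + (1-r) * b * S powr (p-1) * (real (card I - 1) * S)
          = S powr p"
    proof -
      have th_eq: "\<theta> = 1 - b * real (card I - 1)" using bn by simp
      show ?thesis unfolding e[symmetric] th_eq by (simp add: algebra_simps)
    qed
    finally show ?thesis .
  qed
  then show ?thesis by (simp add: S_def b_def P_def Q_def)
qed

lemma opt_comp:
  fixes p A G n :: real
  assumes p: "p \<noteq> 1" and G: "G > 0" and n: "n > 0"
  defines "K \<equiv> 1 + n * G powr (1/(p-1))"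
  shows "(1/K) powr (2-p) * A + ((1 - 1/K)/n) powr (2-p) * (n*G*A) = K powr (p-1) * A"
proof -
  have Gs: "G powr (1/(p-1)) > 0" using G by simp
  have K: "K > 0" unfolding K_def using Gs n by (simp add: add_pos_pos)
  have e1: "(1 - 1/K)/n = G powr (1/(p-1)) / K"
  proof -
    have "1 - 1/K = (K-1)/K" using K by (simp add: field_simps)
    also have "K - 1 = n * G powr (1/(p-1))" unfolding K_def by simp
    finally show ?thesis using n by simp
  qed
  have Kinv: "K powr (p-2) = 1 / K powr (2-p)" by (metis minus_diff_eq powr_minus_divide)
  have e2: "(G powr (1/(p-1)) / K) powr (2-p) = G powr ((2-p)/(p-1)) * K powr (p-2)"
    using G K by (simp add: powr_divide powr_powr Kinv)
  have e3: "G powr ((2-p)/(p-1)) * G = G powr (1/(p-1))"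
  proof -
    have "(2-p)/(p-1) + 1 = 1/(p-1)" using p by (simp add: field_simps)
    moreover have "G powr ((2-p)/(p-1)) * G = G powr ((2-p)/(p-1) + 1)" using G by (simp add: powr_add)
    ultimately show ?thesis by simp
  qed
  have e4: "(1/K) powr (2-p) = K powr (p-2)"
    using K by (simp add: powr_divide Kinv)
  have e5: "K powr (p-2) * K = K powr (p-1)"
  proof -
    have "K powr ((p-2)+1) = K powr (p-2) * K powr 1" by (rule powr_add)
    moreover have "(p-2)+1 = p-1" by simp
    ultimately show ?thesis using K by simp
  qed
  have "(1/K) powr (2-p) * A + ((1 - 1/K)/n) powr (2-p) * (n*G*A)
      = K powr (p-2) * A * (1 + n * (G powr ((2-p)/(p-1)) * G))"
    unfolding e1 e2 e4 by (simp add: algebra_simps)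
  also have "\<dots> = K powr (p-2) * K * A" unfolding e3 K_def by simp
  finally show ?thesis unfolding e5 .
qed

lemma opt_gt2:
  fixes p A G n Z :: real
  assumes p: "p > 2" and A: "A > 0" and G: "G \<ge> 0" and n: "n > 0"
    and H: "\<And>\<theta>. 0 < \<theta> \<Longrightarrow> \<theta> < 1 \<Longrightarrow> Z \<le> \<theta> powr (2-p) * A + ((1-\<theta>)/n) powr (2-p) * (n*G*A)"
  shows "Z \<le> (1 + n * G powr (1/(p-1))) powr (p-1) * A"
proof (cases "G = 0")
  case False
  then have G0: "G > 0" using G by simp
  define K where "K = 1 + n * G powr (1/(p-1))"
  have K: "K > 1" unfolding K_def using G0 n by simp
  have "Z \<le> (1/K) powr (2-p) * A + ((1 - 1/K)/n) powr (2-p) * (n*G*A)"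
    using K by (intro H) auto
  also have "\<dots> = K powr (p-1) * A" unfolding K_def using opt_comp[of p G n A] p G0 n by simp
  finally show ?thesis unfolding K_def .
next
  case True
  show ?thesis
  proof (rule ccontr)
    assume "\<not> ?thesis"
    then have ZA: "Z > A" using True by simp
    define t where "t = (Z/A) powr (1/(2-p))"
    have t0: "t > 0" unfolding t_def using ZA A by simp
    have t1: "t < 1" unfolding t_def using ZA A p
      by (simp add: powr_less_one)
    have tp: "t powr (2-p) = Z/A" unfolding t_def using ZA A p by (simp add: powr_powr)
    define \<theta> where "\<theta> = (1+t)/2"
    have th: "0 < \<theta>" "\<theta> < 1" "t < \<theta>" using t0 t1 by (auto simp: \<theta>_def)
    have "\<theta> powr (2-p) < t powr (2-p)"
      using th t0 p by (intro powr_less_mono2_neg) auto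
    then have "\<theta> powr (2-p) * A < Z" using tp A by (simp add: field_simps)
    moreover have "Z \<le> \<theta> powr (2-p) * A" using H[OF th(1,2)] True by simp
    ultimately show False by simp
  qed
qed

lemma opt_lt2:
  fixes p A G n Z :: real
  assumes p: "1 < p" "p < 2" and A: "A > 0" and G: "G \<ge> 0" and n: "n > 0"
    and H: "\<And>\<theta>. 0 < \<theta> \<Longrightarrow> \<theta> \<le> 1 \<Longrightarrow> \<theta> powr (2-p) * A + ((1-\<theta>)/n) powr (2-p) * (n*G*A) \<le> Z"
  shows "(1 + n * G powr (1/(p-1))) powr (p-1) * A \<le> Z"
proof (cases "G = 0")
  case False
  then have G0: "G > 0" using G by simp
  define K where "K = 1 + n * G powr (1/(p-1))"
  have K: "K > 1" unfolding K_def using G0 n by simp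
  have "K powr (p-1) * A = (1/K) powr (2-p) * A + ((1 - 1/K)/n) powr (2-p) * (n*G*A)"
    unfolding K_def using opt_comp[of p G n A] p G0 n by simp
  also have "\<dots> \<le> Z" using K by (intro H) auto
  finally show ?thesis unfolding K_def .
next
  case True
  then show ?thesis using H[of 1] by simp
qed

lemma sym_sum:
  fixes g :: "nat \<Rightarrow> nat \<Rightarrow> real"
  assumes sym: "\<And>i j. g i j = g j i"
  shows "(\<Sum>i\<in>{1..N}. \<Sum>j\<in>{1..N}-{i}. g i j) = 2 * (\<Sum>i\<in>{1..N}. \<Sum>j\<in>{i<..N}. g i j)"
proof -
  have split: "(\<Sum>j\<in>{1..N}-{i}. g i j) = (\<Sum>j\<in>{j\<in>{1..N}. j < i}. g i j) + (\<Sum>j\<in>{i<..N}. g i j)"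
    if "i \<in> {1..N}" for i
  proof -
    have "{1..N}-{i} = {j\<in>{1..N}. j < i} \<union> {i<..N}" using that by auto
    moreover have "{j\<in>{1..N}. j < i} \<inter> {i<..N} = {}" by auto
    ultimately show ?thesis by (simp add: sum.union_disjoint)
  qed
  have swap: "(\<Sum>i\<in>{1..N}. \<Sum>j\<in>{j\<in>{1..N}. j < i}. g i j) = (\<Sum>j\<in>{1..N}. \<Sum>i\<in>{i\<in>{1..N}. j < i}. g i j)"
    by (rule sum.swap_restrict) auto
  have "(\<Sum>j\<in>{1..N}. \<Sum>i\<in>{i\<in>{1..N}. j < i}. g i j) = (\<Sum>j\<in>{1..N}. \<Sum>i\<in>{j<..N}. g j i)"
  proof (rule sum.cong[OF refl])
    fix j assume "j \<in> {1..N}"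
    then have "{i\<in>{1..N}. j < i} = {j<..N}" by auto
    then show "(\<Sum>i\<in>{i\<in>{1..N}. j < i}. g i j) = (\<Sum>i\<in>{j<..N}. g j i)" by (simp add: sym)
  qed
  then show ?thesis using split swap by (simp add: sum.distrib)
qed

lemma choose2_real: "real (N choose 2) = real N * (real N - 1) / 2"
proof -
  have "even (N * (N - 1))" by auto
  then have "(N choose 2) * 2 = N * (N - 1)" by (simp add: choose_two)
  then have "real (N choose 2) * 2 = real N * real (N - 1)" by (metis of_nat_mult of_nat_numeral)
  then show ?thesis by (cases N) auto
qed

lemma nn_sum_real:
  fixes h :: "'b \<Rightarrow> 'a \<Rightarrow> real"
  assumes "finite K" "\<And>k. k\<in>K \<Longrightarrow> h k \<in> borel_measurable M"
    "\<And>k x. k\<in>K \<Longrightarrow> x\<in>space M \<Longrightarrow> h k x \<ge> 0"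
    "\<And>k. k\<in>K \<Longrightarrow> (\<integral>\<^sup>+x. ennreal (h k x) \<partial>M) = ennreal (v k)" "\<And>k. k \<in> K \<Longrightarrow> v k \<ge> 0"
  shows "(\<integral>\<^sup>+x. ennreal (\<Sum>k\<in>K. h k x) \<partial>M) = ennreal (\<Sum>k\<in>K. v k)"
proof -
  have "(\<integral>\<^sup>+x. ennreal (\<Sum>k\<in>K. h k x) \<partial>M) = (\<integral>\<^sup>+x. (\<Sum>k\<in>K. ennreal (h k x)) \<partial>M)"
    using assms(3) by (intro nn_integral_cong) (simp add: sum_ennreal)
  also have "\<dots> = (\<Sum>k\<in>K. \<integral>\<^sup>+x. ennreal (h k x) \<partial>M)"
    using assms(2) by (intro nn_integral_sum) auto
  also have "\<dots> = (\<Sum>k\<in>K. ennreal (v k))" using assms(4) by simp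
  also have "\<dots> = ennreal (\<Sum>k\<in>K. v k)" using assms(5) by (simp add: sum_ennreal)
  finally show ?thesis .
qed

lemma nn_lin2:
  fixes g h :: "'a \<Rightarrow> real"
  assumes "g \<in> borel_measurable M" "h \<in> borel_measurable M"
    "\<And>x. x\<in>space M \<Longrightarrow> g x \<ge> 0" "\<And>x. x\<in>space M \<Longrightarrow> h x \<ge> 0"
    "(\<integral>\<^sup>+x. ennreal (g x) \<partial>M) = ennreal u" "(\<integral>\<^sup>+x. ennreal (h x) \<partial>M) = ennreal v"
    "u \<ge> 0" "v \<ge> 0" "c \<ge> 0" "d \<ge> 0"
  shows "(\<integral>\<^sup>+x. ennreal (c * g x + d * h x) \<partial>M) = ennreal (c * u + d * v)"
proof -
  have "(\<integral>\<^sup>+x. ennreal (c * g x + d * h x) \<partial>M) = (\<integral>\<^sup>+x. ennreal c * ennreal (g x) + ennreal d * ennreal (h x) \<partial>M)"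
    using assms(3,4,9,10) by (intro nn_integral_cong) (simp add: ennreal_plus ennreal_mult)
  also have "\<dots> = ennreal c * (\<integral>\<^sup>+x. ennreal (g x) \<partial>M) + ennreal d * (\<integral>\<^sup>+x. ennreal (h x) \<partial>M)"
    using assms(1,2) by (simp add: nn_integral_add nn_integral_cmult)
  also have "\<dots> = ennreal (c * u + d * v)"
    using assms by (simp add: ennreal_plus ennreal_mult)
  finally show ?thesis .
qed

lemma max_bound:
  fixes x :: "nat \<Rightarrow> real"
  assumes I: "finite I" "I \<noteq> {}" and x: "\<forall>j\<in>I. x j \<ge> 0" and p: "p \<ge> 0"
  shows "(\<Sum>j\<in>I. x j) powr p \<le> real (card I) powr p * (\<Sum>j\<in>I. x j powr p)"
proof -
  define m where "m = Max (x ` I)"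
  have "m \<in> x ` I" unfolding m_def using I by (intro Max_in) auto
  then obtain k where k: "k \<in> I" "m = x k" by auto
  have xm: "x j \<le> m" if "j \<in> I" for j unfolding m_def using I that by simp
  have "(\<Sum>j\<in>I. x j) \<le> real (card I) * m" using sum_bounded_above[of I x m] xm by auto
  then have "(\<Sum>j\<in>I. x j) powr p \<le> (real (card I) * m) powr p"
    using x p by (intro powr_mono2) (auto intro: sum_nonneg)
  also have "\<dots> = real (card I) powr p * m powr p" using k x by (simp add: powr_mult)
  also have "m powr p \<le> (\<Sum>j\<in>I. x j powr p)" unfolding k(2) using k(1) I by (intro member_le_sum) auto
  then have "real (card I) powr p * m powr p \<le> real (card I) powr p * (\<Sum>j\<in>I. x j powr p)"
    by (simp add: mult_left_mono)
  finally show ?thesis .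
qed

lemma prod_bound:
  fixes x y p :: real
  assumes "x \<ge> 0" "y \<ge> 0" "p > 0"
  shows "(x * y) powr (p/2) \<le> x powr p + y powr p"
proof -
  have "(x * y) powr (p/2) = (x powr p) powr (1/2) * (y powr p) powr (1-1/2)"
    using assms by (simp add: powr_mult powr_powr)
  also have "\<dots> \<le> 1/2 * x powr p + (1-1/2) * y powr p" by (rule amgm) auto
  also have "\<dots> \<le> x powr p + y powr p" using powr_ge_zero[of x p] powr_ge_zero[of y p] by (simp add: field_simps)
  finally show ?thesis .
qed

theorem corollary1p2:
  fixes M :: "'a measure" and N :: nat and f :: "nat \<Rightarrow> 'a \<Rightarrow> real"
  assumes N: "N \<ge> 2"
    and meas: "\<And>j. j \<in> {1..N} \<Longrightarrow> f j \<in> borel_measurable M"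
    and nonneg: "\<And>j x. j \<in> {1..N} \<Longrightarrow> x \<in> space M \<Longrightarrow> f j x \<ge> 0"
    and pos: "0 < (\<Sum>j\<in>{1..N}. \<integral>\<^sup>+ x. ennreal (\<bar>f j x\<bar> powr p) \<partial>M)"
    and fin: "(\<Sum>j\<in>{1..N}. \<integral>\<^sup>+ x. ennreal (\<bar>f j x\<bar> powr p) \<partial>M) < \<infinity>"
  shows "(2 < p \<longrightarrow>
            lpow M p (\<lambda>x. \<Sum>j\<in>{1..N}. f j x)
              \<le> (1 + real (N - 1) * Gamma_tilde M p N f powr (1 / (p - 1))) powr (p - 1)
                  * (\<Sum>j\<in>{1..N}. lpow M p (f j)))
       \<and> (1 < p \<and> p < 2 \<longrightarrow>
            lpow M p (\<lambda>x. \<Sum>j\<in>{1..N}. f j x)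
              \<ge> (1 + real (N - 1) * Gamma_tilde M p N f powr (1 / (p - 1))) powr (p - 1)
                  * (\<Sum>j\<in>{1..N}. lpow M p (f j)))"
proof (cases "1 < p")
  case False
  then show ?thesis by auto
next
  case p1: True
  define I where "I = {1..N}"
  have finI: "finite I" and cardI: "card I = N" and cardI2: "card I \<ge> 2" and IN: "I \<noteq> {}"
    using N by (auto simp: I_def)
  define Ij where "Ij j = (\<integral>\<^sup>+x. ennreal (\<bar>f j x\<bar> powr p) \<partial>M)" for j
  define Jij where "Jij i j = (\<integral>\<^sup>+x. ennreal (\<bar>f i x * f j x\<bar> powr (p/2)) \<partial>M)" for i j
  define ZZ where "ZZ = (\<integral>\<^sup>+x. ennreal (\<bar>\<Sum>j\<in>{1..N}. f j x\<bar> powr p) \<partial>M)"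
  define a where "a j = lpow M p (f j)" for j
  define bb where "bb i j = lpow M (p/2) (\<lambda>x. f i x * f j x)" for i j
  define A where "A = (\<Sum>j\<in>I. a j)"
  define Q where "Q = (\<Sum>i\<in>I. \<Sum>j\<in>I-{i}. bb i j)"
  define Z where "Z = lpow M p (\<lambda>x. \<Sum>j\<in>{1..N}. f j x)"
  define G where "G = Gamma_tilde M p N f"
  define n where "n = real (N - 1)"
  have n: "n > 0" using N by (simp add: n_def)
  have measI: "f j \<in> borel_measurable M" if "j \<in> I" for j using meas that by (simp add: I_def)
  have nnI: "f j x \<ge> 0" if "j \<in> I" "x \<in> space M" for j x using nonneg that by (simp add: I_def)
  have mpow: "(\<lambda>x. \<bar>f j x\<bar> powr p) \<in> borel_measurable M" if "j \<in> I" for j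
    using measurable_abs_powr[OF measI[OF that]] .
  have mprod: "(\<lambda>x. \<bar>f i x * f j x\<bar> powr (p/2)) \<in> borel_measurable M" if "i \<in> I" "j \<in> I" for i j
    using measurable_abs_powr[OF borel_measurable_times[OF measI[OF that(1)] measI[OF that(2)]]] .
  have mS: "(\<lambda>x. \<bar>\<Sum>j\<in>{1..N}. f j x\<bar> powr p) \<in> borel_measurable M"
    by (intro measurable_abs_powr borel_measurable_sum) (use measI in \<open>auto simp: I_def\<close>)
  have Ifin: "Ij j < \<infinity>" if "j \<in> I" for j
    using fin that finI unfolding Ij_def I_def by (simp add: less_top[symmetric])
  have Ia: "Ij j = ennreal (a j)" if "j \<in> I" for j
    using Ifin[OF that] unfolding a_def lpow_def Ij_def by simp
  have a0: "a j \<ge> 0" for j unfolding a_def lpow_def by simp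
  have Jle: "Jij i j \<le> Ij i + Ij j" if "i \<in> I" "j \<in> I" for i j
  proof -
    have "Jij i j \<le> (\<integral>\<^sup>+x. ennreal (\<bar>f i x\<bar> powr p) + ennreal (\<bar>f j x\<bar> powr p) \<partial>M)"
      unfolding Jij_def
    proof (intro nn_integral_mono)
      fix x
      have "\<bar>f i x * f j x\<bar> powr (p/2) \<le> \<bar>f i x\<bar> powr p + \<bar>f j x\<bar> powr p"
        using prod_bound[of "\<bar>f i x\<bar>" "\<bar>f j x\<bar>" p] p1 by (simp add: abs_mult)
      then show "ennreal (\<bar>f i x * f j x\<bar> powr (p/2)) \<le> ennreal (\<bar>f i x\<bar> powr p) + ennreal (\<bar>f j x\<bar> powr p)"
        by (simp add: ennreal_plus[symmetric] del: ennreal_plus)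
    qed
    also have "\<dots> = Ij i + Ij j" unfolding Ij_def using mpow that by (simp add: nn_integral_add)
    finally show ?thesis .
  qed
  have Jb: "Jij i j = ennreal (bb i j)" if "i \<in> I" "j \<in> I" for i j
  proof -
    have "Ij i + Ij j < \<infinity>" using Ifin that by simp
    then have "Jij i j < \<infinity>" using Jle[OF that] by (rule le_less_trans[rotated])
    then show ?thesis unfolding bb_def lpow_def Jij_def by simp
  qed
  have b0: "bb i j \<ge> 0" for i j unfolding bb_def lpow_def by simp
  have bsym: "bb i j = bb j i" for i j unfolding bb_def by (simp add: mult.commute)
  have sumI: "(\<Sum>j\<in>I. Ij j) = ennreal A"
    unfolding A_def using Ia a0 by (simp add: sum_ennreal[symmetric] del: sum_ennreal)
  have A0: "A > 0"
  proof -
    have "0 < ennreal A" using pos sumI unfolding Ij_def I_def by simp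
    then show ?thesis by (simp add: ennreal_less_zero_iff)
  qed
  have Q0: "Q \<ge> 0" unfolding Q_def using b0 by (simp add: sum_nonneg)
  have QG: "Q = n * G * A"
  proof -
    have Q2: "Q = 2 * (\<Sum>i\<in>{1..N}. \<Sum>j\<in>{i<..N}. bb i j)"
      unfolding Q_def I_def by (rule sym_sum) (rule bsym)
    have "G = ((Q/2) / real (N choose 2)) / (A / real N)"
      unfolding G_def Gamma_tilde_def Q2 A_def a_def bb_def I_def by simp
    also have "\<dots> = Q / (n * A)"
      unfolding choose2_real n_def using N A0 by (simp add: field_simps of_nat_diff)
    finally show ?thesis using n A0 by (simp add: field_simps)
  qed
  have G0: "G \<ge> 0"
  proof -
    have "G = Q / (n * A)" using QG n A0 by simp
    then show ?thesis using Q0 n A0 by simp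
  qed
  define Pf where "Pf x = (\<Sum>j\<in>I. \<bar>f j x\<bar> powr p)" for x
  define Qf where "Qf x = (\<Sum>i\<in>I. \<Sum>j\<in>I-{i}. \<bar>f i x * f j x\<bar> powr (p/2))" for x
  have mPf: "Pf \<in> borel_measurable M" unfolding Pf_def using mpow by (intro borel_measurable_sum) auto
  have mQf: "Qf \<in> borel_measurable M" unfolding Qf_def using mprod by (intro borel_measurable_sum) auto
  have Pf0: "Pf x \<ge> 0" for x unfolding Pf_def by (simp add: sum_nonneg)
  have Qf0: "Qf x \<ge> 0" for x unfolding Qf_def by (simp add: sum_nonneg)
  have intP: "(\<integral>\<^sup>+x. ennreal (Pf x) \<partial>M) = ennreal A"
    unfolding Pf_def A_def using finI mpow Ia a0 by (intro nn_sum_real) (auto simp: Ij_def)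
  have intQ: "(\<integral>\<^sup>+x. ennreal (Qf x) \<partial>M) = ennreal Q"
    unfolding Qf_def Q_def
  proof (rule nn_sum_real[OF finI])
    fix i assume i: "i \<in> I"
    show "(\<lambda>x. \<Sum>j\<in>I-{i}. \<bar>f i x * f j x\<bar> powr (p/2)) \<in> borel_measurable M"
      using mprod i by (intro borel_measurable_sum) auto
    show "\<And>x. x \<in> space M \<Longrightarrow> 0 \<le> (\<Sum>j\<in>I-{i}. \<bar>f i x * f j x\<bar> powr (p/2))" by (simp add: sum_nonneg)
    show "0 \<le> (\<Sum>j\<in>I-{i}. bb i j)" using b0 by (simp add: sum_nonneg)
    show "(\<integral>\<^sup>+x. ennreal (\<Sum>j\<in>I-{i}. \<bar>f i x * f j x\<bar> powr (p/2)) \<partial>M) = ennreal (\<Sum>j\<in>I-{i}. bb i j)"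
      using finI mprod i Jb b0 by (intro nn_sum_real) (auto simp: Jij_def)
  qed
  have intR: "(\<integral>\<^sup>+x. ennreal (c * Pf x + d * Qf x) \<partial>M) = ennreal (c * A + d * Q)"
    if "c \<ge> 0" "d \<ge> 0" for c d
    using nn_lin2[OF mPf mQf _ _ intP intQ] Pf0 Qf0 A0 Q0 that by simp
  have pw: "\<forall>j\<in>I. f j x \<ge> 0" if "x \<in> space M" for x using nnI that by auto
  have absS: "\<bar>\<Sum>j\<in>{1..N}. f j x\<bar> = (\<Sum>j\<in>I. f j x)" if "x \<in> space M" for x
    using pw[OF that] unfolding I_def by (intro abs_of_nonneg sum_nonneg) auto
  have Pfx: "Pf x = (\<Sum>j\<in>I. f j x powr p)" if "x \<in> space M" for x
    unfolding Pf_def using pw[OF that] by (intro sum.cong) auto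
  have Qfx: "Qf x = (\<Sum>i\<in>I. \<Sum>j\<in>I-{i}. (f i x * f j x) powr (p/2))" if "x \<in> space M" for x
    unfolding Qf_def using pw[OF that] by (intro sum.cong refl) auto
  have Zeq: "Z = enn2real ZZ" unfolding Z_def ZZ_def lpow_def ..
  have goalA: "(\<Sum>j\<in>{1..N}. lpow M p (f j)) = A" unfolding A_def a_def I_def ..
  show ?thesis
  proof (intro conjI impI)
    assume p2: "2 < p"
    have H: "Z \<le> \<theta> powr (2-p) * A + ((1-\<theta>)/n) powr (2-p) * (n*G*A)" if th: "0 < \<theta>" "\<theta> < 1" for \<theta>
    proof -
      have "ZZ \<le> (\<integral>\<^sup>+x. ennreal (\<theta> powr (2-p) * Pf x + ((1-\<theta>)/n) powr (2-p) * Qf x) \<partial>M)"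
        unfolding ZZ_def
      proof (intro nn_integral_mono ennreal_leI)
        fix x assume x: "x \<in> space M"
        show "\<bar>\<Sum>j\<in>{1..N}. f j x\<bar> powr p \<le> \<theta> powr (2-p) * Pf x + ((1-\<theta>)/n) powr (2-p) * Qf x"
          unfolding absS[OF x] Pfx[OF x] Qfx[OF x] n_def using pw_gt2[OF finI cardI2 pw[OF x] p2 th] cardI by simp
      qed
      also have "\<dots> = ennreal (\<theta> powr (2-p) * A + ((1-\<theta>)/n) powr (2-p) * Q)" by (rule intR) auto
      finally have "enn2real ZZ \<le> \<theta> powr (2-p) * A + ((1-\<theta>)/n) powr (2-p) * Q"
        using A0 Q0 by (intro enn2real_leI) auto
      then show ?thesis by (simp only: Zeq QG)
    qed
    have "Z \<le> (1 + n * G powr (1/(p-1))) powr (p-1) * A"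
      using opt_gt2[OF p2 A0 G0 n H] by blast
    then show "lpow M p (\<lambda>x. \<Sum>j\<in>{1..N}. f j x)
              \<le> (1 + real (N - 1) * Gamma_tilde M p N f powr (1 / (p - 1))) powr (p - 1)
                  * (\<Sum>j\<in>{1..N}. lpow M p (f j))"
      unfolding goalA Z_def[symmetric] G_def[symmetric] n_def[symmetric] .
  next
    assume p12: "1 < p \<and> p < 2"
    have ZZfin: "ZZ < \<infinity>"
    proof -
      have "ZZ \<le> (\<integral>\<^sup>+x. ennreal (real N powr p * Pf x + 0 * Qf x) \<partial>M)"
        unfolding ZZ_def
      proof (intro nn_integral_mono ennreal_leI)
        fix x assume x: "x \<in> space M"
        show "\<bar>\<Sum>j\<in>{1..N}. f j x\<bar> powr p \<le> real N powr p * Pf x + 0 * Qf x"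
          unfolding absS[OF x] Pfx[OF x] using max_bound[OF finI IN pw[OF x], of p] p1 cardI by simp
      qed
      also have "\<dots> = ennreal (real N powr p * A + 0 * Q)" by (rule intR) auto
      finally show ?thesis by (rule le_less_trans) simp
    qed
    have H: "\<theta> powr (2-p) * A + ((1-\<theta>)/n) powr (2-p) * (n*G*A) \<le> Z" if th: "0 < \<theta>" "\<theta> \<le> 1" for \<theta>
    proof -
      have "ennreal (\<theta> powr (2-p) * A + ((1-\<theta>)/n) powr (2-p) * Q) = (\<integral>\<^sup>+x. ennreal (\<theta> powr (2-p) * Pf x + ((1-\<theta>)/n) powr (2-p) * Qf x) \<partial>M)"
        by (rule intR[symmetric]) auto
      also have "\<dots> \<le> ZZ"
        unfolding ZZ_def
      proof (intro nn_integral_mono ennreal_leI)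
        fix x assume x: "x \<in> space M"
        show "\<theta> powr (2-p) * Pf x + ((1-\<theta>)/n) powr (2-p) * Qf x \<le> \<bar>\<Sum>j\<in>{1..N}. f j x\<bar> powr p"
          unfolding absS[OF x] Pfx[OF x] Qfx[OF x] n_def using pw_lt2[OF finI cardI2 pw[OF x] _ _ th] p12 cardI by simp
      qed
      finally have "enn2real (ennreal (\<theta> powr (2-p) * A + ((1-\<theta>)/n) powr (2-p) * Q)) \<le> enn2real ZZ"
        using ZZfin by (intro enn2real_mono) auto
      moreover have "0 \<le> \<theta> powr (2-p) * A + ((1-\<theta>)/n) powr (2-p) * Q"
        using A0 Q0 by (intro add_nonneg_nonneg mult_nonneg_nonneg) auto
      ultimately show ?thesis by (simp only: enn2real_ennreal Zeq QG)
    qed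
    have "(1 + n * G powr (1/(p-1))) powr (p-1) * A \<le> Z"
      using opt_lt2[OF _ _ A0 G0 n H] p12 by blast
    then show "lpow M p (\<lambda>x. \<Sum>j\<in>{1..N}. f j x)
              \<ge> (1 + real (N - 1) * Gamma_tilde M p N f powr (1 / (p - 1))) powr (p - 1)
                  * (\<Sum>j\<in>{1..N}. lpow M p (f j))"
      unfolding goalA Z_def[symmetric] G_def[symmetric] n_def[symmetric] .
  qed
qed

end
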